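(* Let $M,N\in\mathbb{R}^{(k+n)\times(k+n)}$ be symmetric, partitioned as $M=\begin{bmatrix} M_{11} & M_{12}\\ M_{12}^\top & M_{22}\end{bmatrix}$, $N=\begin{bmatrix} N_{11} & N_{12}\\ N_{12}^\top & N_{22}\end{bmatrix}$ with $M_{11},N_{11}\in\mathbb{R}^{k\times k}$ and $M_{22},N_{22}\in\mathbb{R}^{n\times n}$. Assume $M_{22}\le 0$, $N_{22}\le 0$ and $\ker N_{22}\subseteq\ker N_{12}$, and that there exists $\bar Z\in\mathbb{R}^{n\times k}$ with $\begin{bmatrix} I\\ \bar Z\end{bmatrix}^\top N\begin{bmatrix} I\\ \bar Z\end{bmatrix}>0$. Let $\mathcal{S}_N:=\{Z\in\mathbb{R}^{n\times k}\mid \begin{bmatrix} I\\ Z\end{bmatrix}^\top N\begin{bmatrix} I\\ Z\end{bmatrix}\ge 0\}$. Then $\begin{bmatrix} I\\ Z\end{bmatrix}^\top M\begin{bmatrix} I\\ Z\end{bmatrix}>0$ for all $Z\in\mathcal{S}_N$ if and only if there exist $\alpha\ge 0$ and $\beta>0$ such that $$M-\alpha N\ge\begin{bmatrix}\beta I & 0\\ 0 & 0\end{bmatrix}.$$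
   Context: $I$ denotes the $k\times k$ identity. For symmetric matrices, $\ge 0$ means positive semidefinite, $>0$ positive definite, and $A\ge B$ means $A-B\ge0$. *)

theory Defs
  imports "HOL-Analysis.Analysis"
begin

definition psd :: "real^'n^'n \<Rightarrow> bool" where
  "psd A \<longleftrightarrow> (\<forall>x. 0 \<le> x \<bullet> (A *v x))"

definition pd :: "real^'n^'n \<Rightarrow> bool" where
  "pd A \<longleftrightarrow> (\<forall>x. x \<noteq> 0 \<longrightarrow> 0 < x \<bullet> (A *v x))"

definition blk11 :: "real^('k::finite+'n::finite)^('k+'n) \<Rightarrow> real^'k^'k" where
  "blk11 M = (\<chi> i j. M $ Inl i $ Inl j)"
definition blk12 :: "real^('k::finite+'n::finite)^('k+'n) \<Rightarrow> real^'n^'k" where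
  "blk12 M = (\<chi> i j. M $ Inl i $ Inr j)"
definition blk22 :: "real^('k::finite+'n::finite)^('k+'n) \<Rightarrow> real^'n^'n" where
  "blk22 M = (\<chi> i j. M $ Inr i $ Inr j)"

definition stackIZ :: "real^'k::finite^'n::finite \<Rightarrow> real^'k^('k+'n)" where
  "stackIZ Z = (\<chi> r j. case r of Inl i \<Rightarrow> (if i = j then 1 else 0) | Inr i \<Rightarrow> Z $ i $ j)"

definition diagBeta :: "real \<Rightarrow> real^('k::finite+'n::finite)^('k+'n)" where
  "diagBeta \<beta> = (\<chi> r s. case (r, s) of (Inl i, Inl j) \<Rightarrow> (if i = j then \<beta> else 0) | _ \<Rightarrow> 0)"

definition qf :: "real^('k::finite+'n::finite)^('k+'n) \<Rightarrow> real^'k^'n \<Rightarrow> real^'k^'k" where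
  "qf M Z = transpose (stackIZ Z) ** M ** stackIZ Z"

end

theory Submission
  imports Defs
begin


definition vj :: "real^'k::finite \<Rightarrow> real^'n::finite \<Rightarrow> real^('k+'n)" where
  "vj x y = (\<chi> r. case r of Inl i \<Rightarrow> x $ i | Inr i \<Rightarrow> y $ i)"
definition vl :: "real^('k::finite+'n::finite) \<Rightarrow> real^'k" where "vl w = (\<chi> i. w $ Inl i)"
definition vr :: "real^('k::finite+'n::finite) \<Rightarrow> real^'n" where "vr w = (\<chi> i. w $ Inr i)"

lemma vj_split: "vj (vl w) (vr w) = w"
  by (simp add: vec_eq_iff vj_def vl_def vr_def split: sum.splits)
lemma vl_vj[simp]: "vl (vj x y) = x" by (simp add: vec_eq_iff vj_def vl_def)
lemma vr_vj[simp]: "vr (vj x y) = y" by (simp add: vec_eq_iff vj_def vr_def)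

lemma inner_sum_split: "(a::real^('k::finite+'n::finite)) \<bullet> b = vl a \<bullet> vl b + vr a \<bullet> vr b"
  by (simp add: inner_vec_def vl_def vr_def UNIV_Plus_UNIV[symmetric] sum.Plus del: UNIV_Plus_UNIV)

lemma vj_add: "vj (a+b) (c+d) = vj a c + vj b d"
  by (simp add: vec_eq_iff vj_def split: sum.splits)
lemma vj_scale: "vj (t *\<^sub>R a) (t *\<^sub>R c) = t *\<^sub>R vj a c"
  by (simp add: vec_eq_iff vj_def split: sum.splits)
lemma vj_zero[simp]: "vj 0 0 = 0"
  by (simp add: vec_eq_iff vj_def split: sum.splits)
lemma vj_eq0[simp]: "vj a b = 0 \<longleftrightarrow> a = 0 \<and> b = 0"
  by (metis vl_vj vr_vj vj_zero)
lemma vl_lin: "vl (a + b) = vl a + vl b" "vl (t *\<^sub>R a) = t *\<^sub>R vl a" "vl 0 = 0" "vl (a - b) = vl a - vl b"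
  by (simp_all add: vec_eq_iff vl_def)
lemma vr_lin: "vr (a + b) = vr a + vr b" "vr (t *\<^sub>R a) = t *\<^sub>R vr a" "vr 0 = 0" "vr (a - b) = vr a - vr b"
  by (simp_all add: vec_eq_iff vr_def)

lemma stack_mv: "stackIZ Z *v u = vj u (Z *v u)"
proof -
  have "\<And>i. (\<Sum>j\<in>UNIV. (if i = j then 1 else 0) * (u::real^_) $ j) = u $ i"
    by (simp add: if_distrib[of "\<lambda>x. x * _"] cong: if_cong)
  then show ?thesis
    by (simp add: vec_eq_iff stackIZ_def vj_def matrix_vector_mult_def split: sum.splits)
qed

lemma qf_quad: "u \<bullet> (qf M Z *v u) = vj u (Z *v u) \<bullet> (M *v vj u (Z *v u))"
proof -
  have "(transpose (stackIZ Z) ** M ** stackIZ Z) *v u = transpose (stackIZ Z) *v (M *v (stackIZ Z *v u))"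
    by (simp add: matrix_vector_mul_assoc matrix_mul_assoc)
  also have "\<dots> = (M *v (stackIZ Z *v u)) v* stackIZ Z" by simp
  finally have "u \<bullet> (qf M Z *v u) = ((M *v (stackIZ Z *v u)) v* stackIZ Z) \<bullet> u" unfolding qf_def by (simp add: inner_commute)
  also have "\<dots> = (M *v (stackIZ Z *v u)) \<bullet> (stackIZ Z *v u)" by (simp only: dot_lmul_matrix)
  finally show ?thesis by (simp add: stack_mv inner_commute)
qed

lemma blk22_mv: "blk22 M *v v = vr (M *v vj 0 v)"
  by (simp add: vec_eq_iff blk22_def vr_def vj_def matrix_vector_mult_def UNIV_Plus_UNIV[symmetric] sum.Plus del: UNIV_Plus_UNIV)
lemma blk12_mv: "blk12 M *v v = vl (M *v vj 0 v)"
  by (simp add: vec_eq_iff blk12_def vl_def vj_def matrix_vector_mult_def UNIV_Plus_UNIV[symmetric] sum.Plus del: UNIV_Plus_UNIV)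

lemma diag_mv: "diagBeta b *v w = b *\<^sub>R vj (vl w) 0"
proof -
  have "\<And>i. (\<Sum>j\<in>UNIV. (if i = j then b else 0) * (w::real^_) $ Inl j) = b * w $ Inl i"
    by (simp add: if_distrib[of "\<lambda>x. x * _"] cong: if_cong)
  then show ?thesis
    by (simp add: vec_eq_iff diagBeta_def vl_def vj_def matrix_vector_mult_def UNIV_Plus_UNIV[symmetric] sum.Plus del: UNIV_Plus_UNIV split: sum.splits)
qed

lemma sym_inner: "transpose A = A \<Longrightarrow> x \<bullet> ((A::real^'m^'m) *v y) = y \<bullet> (A *v x)"
  by (metis dot_lmul_matrix inner_commute transpose_matrix_vector)

lemma quad_expand: "transpose A = A \<Longrightarrow>
  (u + t *\<^sub>R v) \<bullet> ((A::real^'m^'m) *v (u + t *\<^sub>R v)) = u \<bullet> (A *v u) + 2*t*(u \<bullet> (A *v v)) + t^2 * (v \<bullet> (A *v v))"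
proof -
  assume s: "transpose A = A"
  have e: "A *v (u + t *\<^sub>R v) = A *v u + t *\<^sub>R (A *v v)"
    by (simp add: matrix_vector_right_distrib matrix_vector_mult_scaleR)
  have h1: "(u + t *\<^sub>R v) \<bullet> (A *v u + t *\<^sub>R (A *v v)) = u \<bullet> (A *v u) + t * (u \<bullet> (A *v v)) + t * (v \<bullet> (A *v u)) + t*t * (v \<bullet> (A *v v))"
    by (simp only: inner_add_left inner_add_right inner_scaleR_left inner_scaleR_right) (simp add: algebra_simps)
  have q: "v \<bullet> (A *v u) = u \<bullet> (A *v v)" using sym_inner[OF s, of v u] .
  show ?thesis unfolding e h1 q power2_eq_square by (simp add: distrib_right)
qed



lemma lin_zero:
  fixes s q :: real
  assumes "\<forall>t. 0 \<le> 2*t* s + t^2*q" shows "s = 0"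
proof (rule ccontr)
  assume ns: "s \<noteq> 0"
  define d where "d = \<bar>q\<bar> + 1"
  have dp: "d > 0" by (simp add: d_def add_nonneg_pos)
  define t where "t = - s / d"
  have h0: "0 \<le> 2*t* s + t^2*q" using assms by blast
  have h1: "t^2 * q \<le> t^2 * d" using d_def by (intro mult_left_mono) auto
  have h2: "2*t* s + t^2*d = - (s * s) / d" using dp by (simp add: t_def power2_eq_square field_simps)
  have "0 < s * s" using ns not_real_square_gt_zero by blast
  hence h3: "- (s * s) / d < 0" using dp by (simp add: divide_pos_pos)
  show False using h0 h1 h2 h3 by linarith
qed

lemma lead_nonneg:
  fixes A s q :: real
  assumes "\<forall>t. 0 \<le> A + 2*t* s + t^2*q" shows "0 \<le> q"
proof (rule ccontr)
  assume "\<not> 0 \<le> q" hence qn: "q < 0" by simp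
  define t where "t = (2* \<bar>s\<bar> + \<bar>A\<bar> + 1) / (-q) + 1"
  have "0 \<le> (2*\<bar>s\<bar> + \<bar>A\<bar> + 1) / (-q)" using qn by (intro divide_nonneg_pos) auto
  hence t1: "t \<ge> 1" unfolding t_def by linarith
  have tq: "t * (-q) \<ge> 2* \<bar>s\<bar> + \<bar>A\<bar> + 1"
  proof -
    have "t * (-q) = (2* \<bar>s\<bar> + \<bar>A\<bar> + 1) + (-q)" using qn by (simp add: t_def field_simps)
    thus ?thesis using qn by simp
  qed
  have "0 \<le> A + 2*t* s + t^2*q" using assms by blast
  also have "A + 2*t* s + t^2*q \<le> \<bar>A\<bar> + t * (2* \<bar>s\<bar> - t*(-q))"
  proof -
    have "2*t* s \<le> 2*t* \<bar>s\<bar>" using t1 by (simp add: mult_left_mono)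
    thus ?thesis by (simp add: power2_eq_square algebra_simps)
  qed
  also have "\<dots> \<le> \<bar>A\<bar> + t * (-\<bar>A\<bar> - 1)"
    using tq t1 by (intro add_left_mono mult_left_mono) auto
  also have "\<dots> \<le> \<bar>A\<bar> + 1 * (-\<bar>A\<bar> - 1)"
    using t1 by (intro add_left_mono mult_right_mono_neg) auto
  finally show False by simp
qed

lemma key2d:
  fixes A B :: "real^'m^'m"
  assumes sA: "transpose A = A" and sB: "transpose B = B"
    and H: "\<forall>w. 0 \<le> w \<bullet> (B *v w) \<longrightarrow> 0 \<le> w \<bullet> (A *v w)"
    and u: "0 < u \<bullet> (B *v u)" and v: "v \<bullet> (B *v v) < 0"
  shows "(v \<bullet> (A *v v)) / (v \<bullet> (B *v v)) \<le> (u \<bullet> (A *v u)) / (u \<bullet> (B *v u))"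
proof -
  define p where "p = u \<bullet> (B *v u)"
  define a where "a = v \<bullet> (B *v v)"
  define b where "b = u \<bullet> (B *v v)"
  define Fu where "Fu = u \<bullet> (A *v u)"
  define Fv where "Fv = v \<bullet> (A *v v)"
  define c where "c = u \<bullet> (A *v v)"
  define l where "l = Fv / a"
  have pp: "p > 0" using u p_def by simp
  have an: "a < 0" using v a_def by simp
  define D where "D = b^2 - a*p"
  have Dp: "D > 0" using pp an unfolding D_def
    by (smt (verit) mult_neg_pos zero_le_power2)
  define r1 where "r1 = (- b + sqrt D) / a"
  define r2 where "r2 = (- b - sqrt D) / a"
  have sq: "sqrt D ^ 2 = D" using Dp by simp
  have root: "p + 2*r*b + r^2*a = 0" if "r = r1 \<or> r = r2" for r
  proof -
    have "a*(p + 2*r*b + r^2*a) = (a*r + b)^2 - D"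
      unfolding D_def by (simp add: power2_eq_square algebra_simps)
    also have "a*r + b = sqrt D \<or> a*r + b = - sqrt D" using that an
      by (auto simp: r1_def r2_def)
    hence "(a*r + b)^2 = D" using sq by auto
    finally show ?thesis using an by simp
  qed
  have prod: "r1 * r2 = p / a"
  proof -
    have "r1 * r2 = (b^2 - (sqrt D)^2) / (a*a)"
      by (simp add: r1_def r2_def power2_eq_square algebra_simps)
    also have "\<dots> = (a*p)/(a*a)" using sq by (simp add: D_def)
    also have "\<dots> = p / a" using an by simp
    finally show ?thesis .
  qed
  have prodn: "r1 * r2 < 0" using prod pp an by (simp add: divide_pos_neg)
  have ineq: "0 \<le> (Fu - l*p) + 2*r*(c - l*b)" if "r = r1 \<or> r = r2" for r
  proof -
    have G: "(u + r *\<^sub>R v) \<bullet> (B *v (u + r *\<^sub>R v)) = 0"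
      using quad_expand[OF sB, of u r v] root[OF that] by (simp add: p_def b_def a_def)
    have "0 \<le> (u + r *\<^sub>R v) \<bullet> (A *v (u + r *\<^sub>R v))" using H G by simp
    also have "\<dots> = Fu + 2*r*c + r^2*Fv" using quad_expand[OF sA, of u r v] by (simp add: Fu_def c_def Fv_def)
    also have "\<dots> = (Fu + 2*r*c + r^2*Fv) - l * (p + 2*r*b + r^2*a)" using root[OF that] by simp
    also have "\<dots> = (Fu - l*p) + 2*r*(c - l*b)" using an by (simp add: l_def algebra_simps)
    finally show ?thesis .
  qed
  have X: "0 \<le> Fu - l*p"
  proof (rule ccontr)
    assume "\<not> 0 \<le> Fu - l*p"
    hence "0 < r1*(c - l*b)" "0 < r2*(c - l*b)" using ineq by force+
    hence "0 < (r1*(c - l*b)) * (r2*(c - l*b))" by simp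
    also have "(r1*(c - l*b)) * (r2*(c - l*b)) = (r1*r2) * (c - l*b)^2" by (simp add: power2_eq_square)
    also have "\<dots> \<le> 0" using prodn by (simp add: mult_nonpos_nonneg)
    finally show False by simp
  qed
  show ?thesis using X pp unfolding l_def p_def Fu_def a_def Fv_def by (simp add: field_simps)
qed

lemma S_lemma:
  fixes A B :: "real^'m^'m"
  assumes sA: "transpose A = A" and sB: "transpose B = B"
    and H: "\<forall>w. 0 \<le> w \<bullet> (B *v w) \<longrightarrow> 0 \<le> w \<bullet> (A *v w)"
    and w0: "0 < w0 \<bullet> (B *v w0)"
  shows "\<exists>\<alpha>\<ge>0. \<forall>w. 0 \<le> w \<bullet> (A *v w) - \<alpha> * (w \<bullet> (B *v w))"
proof -
  define S where "S = {(w \<bullet> (A *v w)) / (w \<bullet> (B *v w)) | w. 0 < w \<bullet> (B *v w)}"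
  have ne: "S \<noteq> {}" using w0 S_def by blast
  have lb: "\<And>x. x \<in> S \<Longrightarrow> 0 \<le> x" using H unfolding S_def by fastforce
  have bdd: "bdd_below S" using lb by (meson bdd_below.I)
  define \<alpha> where "\<alpha> = Inf S"
  have a0: "\<alpha> \<ge> 0" unfolding \<alpha>_def using ne lb by (rule cInf_greatest)
  have "0 \<le> w \<bullet> (A *v w) - \<alpha> * (w \<bullet> (B *v w))" for w
  proof (cases "0 < w \<bullet> (B *v w)")
    case True
    hence "\<alpha> \<le> (w \<bullet> (A *v w)) / (w \<bullet> (B *v w))" unfolding \<alpha>_def
      by (intro cInf_lower bdd) (auto simp: S_def)
    thus ?thesis using True by (simp add: field_simps)
  next
    case False
    show ?thesis
    proof (cases "w \<bullet> (B *v w) = 0")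
      case True thus ?thesis using H by simp
    next
      case F2: False
      hence neg: "w \<bullet> (B *v w) < 0" using False by simp
      have "(w \<bullet> (A *v w)) / (w \<bullet> (B *v w)) \<le> \<alpha>" unfolding \<alpha>_def
        using ne proof (rule cInf_greatest)
        fix x assume "x \<in> S"
        then obtain u where "x = (u \<bullet> (A *v u)) / (u \<bullet> (B *v u))" "0 < u \<bullet> (B *v u)" unfolding S_def by blast
        thus "(w \<bullet> (A *v w)) / (w \<bullet> (B *v w)) \<le> x" using key2d[OF sA sB H _ neg] by simp
      qed
      thus ?thesis using neg by (simp add: field_simps)
    qed
  qed
  thus ?thesis using a0 by blast
qed



lemma inner_vj0: "vj 0 e \<bullet> w = e \<bullet> vr w"
  by (simp add: inner_sum_split[of "vj 0 e"])
lemma inner_vjx0: "vj x 0 \<bullet> w = x \<bullet> vl w"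
  by (simp add: inner_sum_split[of "vj x 0"])
lemma neg_mv: "(- A) *v v = - (A *v (v::real^_))"
  by (simp add: vec_eq_iff matrix_vector_mult_def sum_negf)
lemma mv_neg: "A *v (- v) = - (A *v (v::real^_))"
  by (simp add: vec_eq_iff matrix_vector_mult_def sum_negf)
lemma quad22: "v \<bullet> (blk22 M *v v) = vj 0 v \<bullet> (M *v vj 0 v)"
  by (simp add: inner_vj0 blk22_mv)
lemma nonpos22: "psd (- blk22 M) \<Longrightarrow> vj 0 v \<bullet> (M *v vj 0 v) \<le> 0"
  unfolding psd_def by (erule allE[of _ v]) (simp add: neg_mv quad22)
lemma vj0_comb: "vj 0 v + t *\<^sub>R vj 0 e = vj 0 (v + t *\<^sub>R e)"
  by (metis vj_add vj_scale scaleR_zero_right add_0)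
lemma sym_blk: "transpose A = A \<Longrightarrow> vj 0 v \<bullet> (A *v vj 0 e) = e \<bullet> vr (A *v vj 0 v)"
  by (metis inner_vj0 sym_inner)

lemma kernel_lemma:
  assumes sA: "transpose A = A" and nA: "psd (- blk22 A)" and z: "vj 0 v \<bullet> (A *v vj 0 v) = 0"
  shows "blk22 A *v v = 0"
proof -
  have "\<forall>t. 0 \<le> 2*t*(- (e \<bullet> vr (A *v vj 0 v))) + t^2 * (- (vj 0 e \<bullet> (A *v vj 0 e)))" for e
  proof
    fix t
    have "(vj 0 v + t *\<^sub>R vj 0 e) \<bullet> (A *v (vj 0 v + t *\<^sub>R vj 0 e)) \<le> 0"
      unfolding vj0_comb by (rule nonpos22[OF nA])
    thus "0 \<le> 2*t*(- (e \<bullet> vr (A *v vj 0 v))) + t^2 * (- (vj 0 e \<bullet> (A *v vj 0 e)))"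
      using quad_expand[OF sA, of "vj 0 v" t "vj 0 e"] z sym_blk[OF sA, of v e] by simp
  qed
  hence "\<And>e. e \<bullet> vr (A *v vj 0 v) = 0" using lin_zero by fastforce
  hence "vr (A *v vj 0 v) = 0" by (metis inner_eq_zero_iff)
  thus ?thesis by (simp add: blk22_mv)
qed

lemma lin_zero2:
  fixes A s :: real
  assumes "\<forall>t. 0 \<le> A + 2*t* s" shows "s = 0"
proof (rule ccontr)
  assume ns: "s \<noteq> 0"
  define t where "t = - (\<bar>A\<bar> + 1) / (2 * s)"
  have "2*t* s = - (\<bar>A\<bar> + 1)" using ns by (simp add: t_def)
  moreover have "0 \<le> A + 2*t* s" using assms by blast
  ultimately show False by linarith
qed

lemma outer_mv: "(\<chi> i j. d$i * a$j / k) *v u = ((a \<bullet> u) / k) *\<^sub>R (d::real^'n)"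
  by (simp add: vec_eq_iff matrix_vector_mult_def inner_vec_def sum_divide_distrib sum_distrib_left algebra_simps)

lemma invariance:
  assumes "transpose A = A" "A *v z = 0"
  shows "(w + z) \<bullet> (A *v (w + z)) = w \<bullet> ((A::real^'m^'m) *v w)"
  using quad_expand[OF assms(1), of w 1 z] assms by simp

locale S6 =
  fixes M N :: "real^('k::finite+'n::finite)^('k+'n)" and Zb :: "real^'k^'n"
  assumes symM: "transpose M = M" and symN: "transpose N = N"
    and negM: "psd (- blk22 M)" and negN: "psd (- blk22 N)"
    and ker: "\<forall>v. blk22 N *v v = 0 \<longrightarrow> blk12 N *v v = 0"
    and slater: "pd (qf N Zb)"
begin

lemma kerN: "blk22 N *v v = 0 \<Longrightarrow> N *v vj 0 v = 0"
  using ker blk12_mv[of N v] blk22_mv[of N v] vj_split[of "N *v vj 0 v"] by simp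

lemma sym22: "r \<bullet> (blk22 N *v v) = v \<bullet> (blk22 N *v r)"
  by (metis blk22_mv inner_vj0 sym_inner symN)

lemma Z0_col: "\<exists>z. blk22 N *v z = - vr (N *v vj x 0)"
proof -
  define r where "r = vr (N *v vj x 0)"
  define R where "R = range ((*v) (blk22 N))"
  have sR: "subspace R" unfolding subspace_def R_def
  proof (intro conjI ballI allI)
    show "0 \<in> range ((*v) (blk22 N))" using matrix_vector_mult_0_right by (metis rangeI)
  next
    fix x y assume "x \<in> range ((*v) (blk22 N))" "y \<in> range ((*v) (blk22 N))"
    then obtain a b where ab: "x = blk22 N *v a" "y = blk22 N *v b" by blast
    hence "x + y = blk22 N *v (a + b)" by (simp add: matrix_vector_right_distrib)
    thus "x + y \<in> range ((*v) (blk22 N))" by blast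
  next
    fix cc x assume "x \<in> range ((*v) (blk22 N))"
    then obtain a where ab: "x = blk22 N *v a" by blast
    hence "cc *\<^sub>R x = blk22 N *v (cc *\<^sub>R a)" by (simp add: matrix_vector_mult_scaleR)
    thus "cc *\<^sub>R x \<in> range ((*v) (blk22 N))" by blast
  qed
  obtain r1 r2 where r1: "r1 \<in> span R" and r2: "\<And>w. w \<in> span R \<Longrightarrow> orthogonal r2 w" and rr: "r = r1 + r2"
    using orthogonal_subspace_decomp_exists[of R r] by blast
  have spR: "span R = R" using sR by simp
  have o1: "r2 \<bullet> (blk22 N *v v) = 0" for v
  proof -
    have "blk22 N *v v \<in> R" unfolding R_def by blast
    hence "blk22 N *v v \<in> span R" by (rule span_base)
    thus ?thesis using r2 unfolding orthogonal_def by blast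
  qed
  have "(blk22 N *v r2) \<bullet> (blk22 N *v r2) = 0" using sym22[of r2 "blk22 N *v r2"] o1[of "blk22 N *v r2"] by (simp add: inner_commute)
  hence k2: "blk22 N *v r2 = 0" by simp
  hence Nk: "N *v vj 0 r2 = 0" by (rule kerN)
  have "r \<bullet> r2 = 0"
  proof -
    have "r \<bullet> r2 = vj 0 r2 \<bullet> (N *v vj x 0)" by (simp add: r_def inner_vj0 inner_commute)
    also have "\<dots> = vj x 0 \<bullet> (N *v vj 0 r2)" by (metis sym_inner symN)
    finally show ?thesis using Nk by simp
  qed
  moreover have "r1 \<bullet> r2 = 0" using r2[OF r1] by (simp add: orthogonal_def inner_commute)
  ultimately have "r2 \<bullet> r2 = 0" using rr by (simp add: inner_add_left)
  hence "r2 = 0" by simp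
  hence "r \<in> R" using rr r1 spR by simp
  then obtain v where "blk22 N *v v = r" unfolding R_def by blast
  hence "blk22 N *v (- v) = - r" by (simp add: mv_neg)
  thus ?thesis unfolding r_def by blast
qed

definition zc :: "'k \<Rightarrow> real^'n" where
  "zc j = (SOME z. blk22 N *v z = - vr (N *v vj (axis j 1) 0))"
definition Z0 :: "real^'k^'n" where "Z0 = (\<chi> i j. zc j $ i)"

lemma zc_prop: "blk22 N *v zc j = - vr (N *v vj (axis j 1) 0)"
  unfolding zc_def using Z0_col by (rule someI_ex)

definition B21 :: "real^'k^'n" where "B21 = (\<chi> i j. N $ Inr i $ Inl j)"

lemma b21_mv: "vr (N *v vj x 0) = B21 *v x"
  by (simp add: vec_eq_iff B21_def vr_def vj_def matrix_vector_mult_def UNIV_Plus_UNIV[symmetric] sum.Plus del: UNIV_Plus_UNIV)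

lemma N22Z0: "blk22 N ** Z0 = - B21"
proof -
  have "(blk22 N ** Z0) $ i $ j = (blk22 N *v zc j) $ i" for i j
    by (simp add: matrix_matrix_mult_def matrix_vector_mult_def Z0_def)
  also have "(blk22 N *v zc j) $ i = - B21 $ i $ j" for i j
    using zc_prop[of j] by (simp add: b21_mv matrix_vector_mult_basis column_def)
  finally show ?thesis by (simp add: vec_eq_iff)
qed

lemma vr_split: "vr (N *v vj u y) = vr (N *v vj u 0) + blk22 N *v y"
proof -
  have "vj u y = vj u 0 + vj 0 y" using vj_add[of u 0 0 y] by simp
  thus ?thesis by (simp add: matrix_vector_right_distrib vr_lin blk22_mv)
qed

lemma Z0_prop: "vr (N *v vj u (Z0 *v u)) = 0"
proof -
  have "blk22 N *v (Z0 *v u) = (blk22 N ** Z0) *v u" by (rule matrix_vector_mul_assoc)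
  also have "\<dots> = - (B21 *v u)" unfolding N22Z0 by (rule neg_mv)
  finally have e: "blk22 N *v (Z0 *v u) = - (B21 *v u)" .
  show ?thesis unfolding vr_split[of u] e b21_mv by simp
qed

abbreviation "p u \<equiv> vj u (Z0 *v u)"
abbreviation "c u \<equiv> p u \<bullet> (N *v p u)"

lemma shift: "vj u (Z0 *v u + d) \<bullet> (N *v vj u (Z0 *v u + d)) = c u + vj 0 d \<bullet> (N *v vj 0 d)"
proof -
  have e: "vj u (Z0 *v u + d) = p u + 1 *\<^sub>R vj 0 d" using vj_add[of u 0 "Z0 *v u" d] by simp
  have "p u \<bullet> (N *v vj 0 d) = d \<bullet> vr (N *v p u)" by (metis inner_vj0 sym_inner symN)
  hence "p u \<bullet> (N *v vj 0 d) = 0" by (simp add: Z0_prop)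
  thus ?thesis unfolding e quad_expand[OF symN] by simp
qed

lemma c_pos: "u \<noteq> 0 \<Longrightarrow> 0 < c u"
proof -
  assume u: "u \<noteq> 0"
  have "0 < u \<bullet> (qf N Zb *v u)" using slater u unfolding pd_def by blast
  also have "\<dots> = vj u (Z0 *v u + (Zb *v u - Z0 *v u)) \<bullet> (N *v vj u (Z0 *v u + (Zb *v u - Z0 *v u)))"
    by (simp add: qf_quad)
  also have "\<dots> = c u + vj 0 (Zb *v u - Z0 *v u) \<bullet> (N *v vj 0 (Zb *v u - Z0 *v u))" by (rule shift)
  also have "\<dots> \<le> c u" using nonpos22[OF negN] by simp
  finally show ?thesis .
qed

lemma c_nonneg: "0 \<le> c u"
  using c_pos[of u] by (cases "u = 0") auto

lemma p_lin: "p (u + t *\<^sub>R x) = p u + t *\<^sub>R p x"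
  by (simp add: matrix_vector_right_distrib matrix_vector_mult_scaleR vj_add[symmetric] vj_scale[symmetric])

lemma CS: "0 < c x \<Longrightarrow> (p u \<bullet> (N *v p x))^2 \<le> c x * c u"
proof -
  assume cx: "0 < c x"
  define b where "b = p u \<bullet> (N *v p x)"
  define t where "t = b / c x"
  have "0 \<le> c (u + (-t) *\<^sub>R x)" by (rule c_nonneg)
  also have "c (u + (-t) *\<^sub>R x) = c u + 2*(-t)*b + (-t)^2 * c x"
    unfolding p_lin quad_expand[OF symN] b_def by simp
  also have "\<dots> = c u - b^2 / c x" using cx by (simp add: t_def power2_eq_square field_simps)
  finally have "b^2 / c x \<le> c u" by simp
  thus ?thesis using cx unfolding b_def by (simp add: field_simps)
qed

end



lemma vj0_scale: "vj 0 (s *\<^sub>R d) = s *\<^sub>R vj 0 d"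
  using vj_scale[of s 0 d] by simp

lemma quad_scale: "(s *\<^sub>R w) \<bullet> (A *v (s *\<^sub>R w)) = s^2 * (w \<bullet> (A *v (w::real^'m)))"
  by (simp add: matrix_vector_mult_scaleR power2_eq_square)

lemma transpose_diff': "transpose (A - B) = transpose A - transpose (B::real^'m^'m)"
  by (simp add: vec_eq_iff transpose_def)

lemma transpose_diag: "transpose (diagBeta b) = diagBeta b"
  by (auto simp: vec_eq_iff transpose_def diagBeta_def split: sum.split)

lemma diag_quad: "w \<bullet> (diagBeta b *v w) = b * (vl w \<bullet> vl w)"
  by (simp add: diag_mv inner_sum_split[of w])

context S6
begin

context
  assumes hyp: "\<forall>Z. psd (qf N Z) \<longrightarrow> pd (qf M Z)"
begin

lemma B1:
  assumes x: "x \<noteq> 0" and gy: "0 \<le> vj x y \<bullet> (N *v vj x y)"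
  shows "0 < vj x y \<bullet> (M *v vj x y)"
proof -
  define d where "d = y - Z0 *v x"
  define cx where "cx = c x"
  have cx: "0 < cx" using c_pos x by (simp add: cx_def)
  define a where "a = transpose (stackIZ Z0) *v (N *v p x)"
  have a_u: "a \<bullet> u = p u \<bullet> (N *v p x)" for u
  proof -
    have "a \<bullet> u = ((N *v p x) v* stackIZ Z0) \<bullet> u" by (simp add: a_def)
    also have "\<dots> = (N *v p x) \<bullet> (stackIZ Z0 *v u)" by (rule dot_lmul_matrix)
    also have "\<dots> = p u \<bullet> (N *v p x)" by (simp add: stack_mv inner_commute)
    finally show ?thesis .
  qed
  define Z where "Z = Z0 + (\<chi> i j. d$i * a$j / cx)"
  have Zu: "Z *v u = Z0 *v u + ((a \<bullet> u) / cx) *\<^sub>R d" for u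
    by (simp add: Z_def matrix_vector_mult_add_rdistrib outer_mv)
  have Zx: "Z *v x = y" using Zu[of x] a_u[of x] cx by (simp add: cx_def d_def)
  define g0 where "g0 = vj 0 d \<bullet> (N *v vj 0 d)"
  have g0n: "g0 \<le> 0" using nonpos22[OF negN] g0_def by simp
  have yd: "y = Z0 *v x + d" by (simp add: d_def)
  have "vj x y \<bullet> (N *v vj x y) = cx + g0" using shift[of x d] by (simp add: yd cx_def g0_def)
  hence g0l: "- cx \<le> g0" using gy by simp
  have psdZ: "psd (qf N Z)"
    unfolding psd_def
  proof
    fix u
    define s where "s = (a \<bullet> u) / cx"
    have e2: "vj 0 (s *\<^sub>R d) \<bullet> (N *v vj 0 (s *\<^sub>R d)) = s^2 * g0"
      unfolding vj0_scale g0_def by (rule quad_scale)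
    have "u \<bullet> (qf N Z *v u) = vj u (Z0 *v u + s *\<^sub>R d) \<bullet> (N *v vj u (Z0 *v u + s *\<^sub>R d))"
      by (simp add: qf_quad Zu s_def)
    also have "\<dots> = c u + s^2 * g0" by (simp only: shift e2)
    finally have e: "u \<bullet> (qf N Z *v u) = c u + s^2 * g0" .
    have cs: "(a \<bullet> u)^2 \<le> cx * c u" using CS[of x u] cx a_u by (simp add: cx_def)
    have m1: "s^2 * (- cx) \<le> s^2 * g0" using g0l by (intro mult_left_mono) auto
    have m2: "s^2 * cx = (a \<bullet> u)^2 / cx" using cx by (simp add: s_def power2_eq_square field_simps)
    have m3: "(a \<bullet> u)^2 / cx \<le> c u" using cs cx by (simp add: divide_le_eq mult.commute)
    show "0 \<le> u \<bullet> (qf N Z *v u)" using e m1 m2 m3 by simp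
  qed
  hence "pd (qf M Z)" using hyp by blast
  hence "0 < x \<bullet> (qf M Z *v x)" using x unfolding pd_def by blast
  thus ?thesis by (simp add: qf_quad Zx)
qed

lemma kerM:
  assumes v: "blk22 N *v v = 0" shows "M *v vj 0 v = 0"
proof -
  define q where "q = vj (0::real^'k) v"
  have Nq: "N *v q = 0" using kerN[OF v] q_def by simp
  have key: "q \<bullet> (M *v q) = 0 \<and> p x \<bullet> (M *v q) = 0" if x: "x \<noteq> 0" for x
  proof -
    have pos: "0 < (p x + t *\<^sub>R q) \<bullet> (M *v (p x + t *\<^sub>R q))" for t
    proof -
      have e: "p x + t *\<^sub>R q = vj x (Z0 *v x + t *\<^sub>R v)"
        by (simp add: vec_eq_iff vj_def q_def split: sum.split)
      have "(p x + t *\<^sub>R q) \<bullet> (N *v (p x + t *\<^sub>R q)) = c x"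
        using quad_expand[OF symN, of "p x" t q] Nq by simp
      hence "0 \<le> vj x (Z0 *v x + t *\<^sub>R v) \<bullet> (N *v vj x (Z0 *v x + t *\<^sub>R v))"
        using c_pos[OF x] e by simp
      from B1[OF x this] show ?thesis using e by simp
    qed
    have all: "\<forall>t. 0 \<le> p x \<bullet> (M *v p x) + 2*t*(p x \<bullet> (M *v q)) + t^2 * (q \<bullet> (M *v q))"
    proof
      fix t show "0 \<le> p x \<bullet> (M *v p x) + 2*t*(p x \<bullet> (M *v q)) + t^2 * (q \<bullet> (M *v q))"
        using pos[of t] quad_expand[OF symM, of "p x" t q] by simp
    qed
    have "0 \<le> q \<bullet> (M *v q)" by (rule lead_nonneg[OF all])
    moreover have "q \<bullet> (M *v q) \<le> 0" using nonpos22[OF negM] q_def by simp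
    ultimately have fq: "q \<bullet> (M *v q) = 0" by simp
    have "\<forall>t. 0 \<le> p x \<bullet> (M *v p x) + 2*t*(p x \<bullet> (M *v q))" using all fq by simp
    hence "p x \<bullet> (M *v q) = 0" by (rule lin_zero2)
    thus ?thesis using fq by simp
  qed
  obtain i :: 'k where True by simp
  have x0: "axis i (1::real) \<noteq> 0" by simp
  have "vj 0 v \<bullet> (M *v vj 0 v) = 0" using key[OF x0] q_def by simp
  hence "blk22 M *v v = 0" by (rule kernel_lemma[OF symM negM])
  hence vrM: "vr (M *v q) = 0" by (simp add: blk22_mv q_def)
  have vlM: "vl (M *v q) = 0"
  proof (rule ccontr)
    assume ne: "vl (M *v q) \<noteq> 0"
    have "p (vl (M *v q)) \<bullet> (M *v q) = 0" using key[OF ne] by simp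
    moreover have "p (vl (M *v q)) \<bullet> (M *v q) = vl (M *v q) \<bullet> vl (M *v q)"
      using vrM by (simp add: inner_sum_split[of "p (vl (M *v q))"])
    ultimately show False using ne by simp
  qed
  show ?thesis using vj_split[of "M *v q"] vrM vlM q_def by simp
qed

lemma beta: "\<exists>\<beta>>0. \<forall>w. 0 \<le> w \<bullet> (N *v w) \<longrightarrow> \<beta> * (vl w \<bullet> vl w) \<le> w \<bullet> (M *v w)"
proof -
  define L where "L = {w :: real^('k+'n). vl w = 0 \<and> blk22 N *v vr w = 0}"
  have Lz: "M *v w = 0 \<and> N *v w = 0" if "w \<in> L" for w
  proof -
    have w: "w = vj 0 (vr w)" "blk22 N *v vr w = 0" using that vj_split[of w] by (auto simp: L_def)
    show ?thesis using kerM[OF w(2)] kerN[OF w(2)] w(1) by simp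
  qed
  have sL: "subspace L" unfolding subspace_def L_def
    by (simp add: vl_lin vr_lin matrix_vector_right_distrib matrix_vector_mult_scaleR)
  define S where "S = {w. norm w = 1 \<and> 0 \<le> w \<bullet> (N *v w) \<and> (\<forall>l\<in>L. l \<bullet> w = 0)}"
  have S_eq: "S = sphere 0 1 \<inter> ({w. (\<lambda>w. 0) w \<le> w \<bullet> (N *v w)} \<inter> (\<Inter>l\<in>L. {w. l \<bullet> w = 0}))"
    by (auto simp: S_def)
  have contN: "continuous_on UNIV (\<lambda>w. w \<bullet> (N *v w))"
    by (intro continuous_intros)
  have contM: "continuous_on S (\<lambda>w. w \<bullet> (M *v w))"
    by (intro continuous_intros)
  have cS: "compact S" unfolding S_eq
    by (intro compact_Int_closed compact_sphere closed_Int closed_Collect_le contN continuous_on_const closed_INT ballI closed_hyperplane)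
  have posS: "0 < w \<bullet> (M *v w)" if w: "w \<in> S" for w
  proof (cases "vl w = 0")
    case False
    have "0 \<le> vj (vl w) (vr w) \<bullet> (N *v vj (vl w) (vr w))" using w vj_split[of w] by (simp add: S_def)
    from B1[OF False this] show ?thesis using vj_split[of w] by simp
  next
    case True
    have ww: "w = vj 0 (vr w)" using True vj_split[of w] by simp
    have "0 \<le> vj 0 (vr w) \<bullet> (N *v vj 0 (vr w))" using w ww by (simp add: S_def)
    moreover have "vj 0 (vr w) \<bullet> (N *v vj 0 (vr w)) \<le> 0" by (rule nonpos22[OF negN])
    ultimately have "vj 0 (vr w) \<bullet> (N *v vj 0 (vr w)) = 0" by simp
    hence "blk22 N *v vr w = 0" by (rule kernel_lemma[OF symN negN])
    hence "w \<in> L" using True by (simp add: L_def)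
    hence "w \<bullet> w = 0" using w by (simp add: S_def)
    hence "w = 0" by simp
    thus ?thesis using w by (simp add: S_def)
  qed
  obtain \<beta> where bp: "\<beta> > 0" and bS: "\<forall>w\<in>S. \<beta> \<le> w \<bullet> (M *v w)"
  proof (cases "S = {}")
    case True thus ?thesis using that[of 1] by simp
  next
    case False
    obtain w0 where w0: "w0 \<in> S" "\<forall>w\<in>S. w0 \<bullet> (M *v w0) \<le> w \<bullet> (M *v w)"
      using continuous_attains_inf[OF cS False contM] by blast
    show ?thesis using that[of "w0 \<bullet> (M *v w0)"] w0 posS by blast
  qed
  have "\<beta> * (vl w \<bullet> vl w) \<le> w \<bullet> (M *v w)" if gw: "0 \<le> w \<bullet> (N *v w)" for w
  proof -
    obtain w2 w1 where w2: "w2 \<in> span L" and w1: "\<And>l. l \<in> span L \<Longrightarrow> orthogonal w1 l" and ws: "w = w2 + w1"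
      using orthogonal_subspace_decomp_exists[of L w] by blast
    have spL: "span L = L" using sL by (rule span_eq_iff[THEN iffD2])
    have w2L: "w2 \<in> L" using w2 unfolding spL .
    have ww: "w = w1 + w2" using ws by simp
    have fw: "w \<bullet> (M *v w) = w1 \<bullet> (M *v w1)" unfolding ww using invariance[OF symM] Lz[OF w2L] by blast
    have gw1: "w \<bullet> (N *v w) = w1 \<bullet> (N *v w1)" unfolding ww using invariance[OF symN] Lz[OF w2L] by blast
    have hw: "vl w = vl w1" using w2L by (simp add: ww vl_lin L_def)
    show ?thesis
    proof (cases "w1 = 0")
      case True thus ?thesis using fw hw by (simp add: vl_lin)
    next
      case False
      define e where "e = (1 / norm w1) *\<^sub>R w1"
      have nw: "norm w1 > 0" using False by simp
      have we: "w1 = norm w1 *\<^sub>R e" using nw by (simp add: e_def)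
      have eS: "e \<in> S"
      proof -
        have "norm e = 1" using nw by (simp add: e_def)
        moreover have "0 \<le> e \<bullet> (N *v e)"
        proof -
          have "e \<bullet> (N *v e) = (1 / norm w1)^2 * (w1 \<bullet> (N *v w1))" unfolding e_def by (rule quad_scale)
          thus ?thesis using gw gw1 by simp
        qed
        moreover have "\<forall>l\<in>L. l \<bullet> e = 0"
        proof
          fix l assume "l \<in> L"
          hence "orthogonal w1 l" using w1 span_base by blast
          thus "l \<bullet> e = 0" by (simp add: e_def orthogonal_def inner_commute)
        qed
        ultimately show ?thesis by (simp add: S_def)
      qed
      have fe: "w1 \<bullet> (M *v w1) = (norm w1)^2 * (e \<bullet> (M *v e))"
        using we quad_scale by metis
      have "\<beta> \<le> e \<bullet> (M *v e)" using bS eS by blast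
      hence "\<beta> * (norm w1)^2 \<le> (e \<bullet> (M *v e)) * (norm w1)^2" by (simp add: mult_right_mono)
      hence f1: "\<beta> * (norm w1)^2 \<le> w1 \<bullet> (M *v w1)" using fe by (simp add: mult.commute)
      have "vl w1 \<bullet> vl w1 \<le> w1 \<bullet> w1" by (simp add: inner_sum_split[of w1 w1])
      hence "vl w1 \<bullet> vl w1 \<le> (norm w1)^2" by (simp add: power2_norm_eq_inner)
      hence "\<beta> * (vl w1 \<bullet> vl w1) \<le> \<beta> * (norm w1)^2" using bp by (simp add: mult_left_mono)
      thus ?thesis using f1 fw hw by simp
    qed
  qed
  thus ?thesis using bp by blast
qed

end

lemma main_iff:
  "(\<forall>Z \<in> {Z :: real^'k^'n. psd (qf N Z)}. pd (qf M Z)) \<longleftrightarrow>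
   (\<exists>\<alpha> \<beta>. \<alpha> \<ge> 0 \<and> \<beta> > 0 \<and> psd (M - \<alpha> *\<^sub>R N - diagBeta \<beta>))"
proof
  assume h: "\<forall>Z \<in> {Z :: real^'k^'n. psd (qf N Z)}. pd (qf M Z)"
  hence hyp: "\<forall>Z. psd (qf N Z) \<longrightarrow> pd (qf M Z)" by blast
  obtain \<beta> where bp: "\<beta> > 0" and bw: "\<forall>w. 0 \<le> w \<bullet> (N *v w) \<longrightarrow> \<beta> * (vl w \<bullet> vl w) \<le> w \<bullet> (M *v w)"
    using beta[OF hyp] by blast
  define A where "A = M - diagBeta \<beta>"
  have sA: "transpose A = A" by (simp add: A_def transpose_diff' transpose_diag symM)
  have Aq: "w \<bullet> (A *v w) = w \<bullet> (M *v w) - \<beta> * (vl w \<bullet> vl w)" for w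
    by (simp add: A_def matrix_vector_mult_diff_rdistrib inner_diff_right diag_quad)
  have H: "\<forall>w. 0 \<le> w \<bullet> (N *v w) \<longrightarrow> 0 \<le> w \<bullet> (A *v w)" using bw Aq by simp
  obtain i :: 'k where True by simp
  have x0: "axis i (1::real) \<noteq> 0" by simp
  obtain \<alpha> where a0: "\<alpha> \<ge> 0" and aw: "\<forall>w. 0 \<le> w \<bullet> (A *v w) - \<alpha> * (w \<bullet> (N *v w))"
    using S_lemma[OF sA symN H c_pos[OF x0]] by blast
  have "psd (M - \<alpha> *\<^sub>R N - diagBeta \<beta>)"
    unfolding psd_def
  proof
    fix w
    have "(M - \<alpha> *\<^sub>R N - diagBeta \<beta>) *v w = A *v w - \<alpha> *\<^sub>R (N *v w)"
      by (simp add: A_def matrix_vector_mult_diff_rdistrib scaleR_matrix_vector_assoc)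
    thus "0 \<le> w \<bullet> ((M - \<alpha> *\<^sub>R N - diagBeta \<beta>) *v w)" using aw by (simp add: inner_diff_right)
  qed
  thus "\<exists>\<alpha> \<beta>. \<alpha> \<ge> 0 \<and> \<beta> > 0 \<and> psd (M - \<alpha> *\<^sub>R N - diagBeta \<beta>)" using a0 bp by blast
next
  assume "\<exists>\<alpha> \<beta>. \<alpha> \<ge> 0 \<and> \<beta> > 0 \<and> psd (M - \<alpha> *\<^sub>R N - diagBeta \<beta>)"
  then obtain \<alpha> \<beta> where a0: "\<alpha> \<ge> 0" and bp: "\<beta> > 0" and P: "psd (M - \<alpha> *\<^sub>R N - diagBeta \<beta>)" by blast
  show "\<forall>Z \<in> {Z :: real^'k^'n. psd (qf N Z)}. pd (qf M Z)"
  proof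
    fix Z :: "real^'k^'n" assume "Z \<in> {Z. psd (qf N Z)}"
    hence PN: "psd (qf N Z)" by simp
    show "pd (qf M Z)" unfolding pd_def
    proof (intro allI impI)
      fix u :: "real^'k" assume u: "u \<noteq> 0"
      define w where "w = vj u (Z *v u)"
      have "0 \<le> w \<bullet> ((M - \<alpha> *\<^sub>R N - diagBeta \<beta>) *v w)" using P unfolding psd_def by blast
      also have "w \<bullet> ((M - \<alpha> *\<^sub>R N - diagBeta \<beta>) *v w) = w \<bullet> (M *v w) - \<alpha> * (w \<bullet> (N *v w)) - \<beta> * (u \<bullet> u)"
        by (simp add: matrix_vector_mult_diff_rdistrib scaleR_matrix_vector_assoc[symmetric] inner_diff_right diag_quad w_def)
      finally have i1: "\<alpha> * (w \<bullet> (N *v w)) + \<beta> * (u \<bullet> u) \<le> w \<bullet> (M *v w)" by simp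
      have "0 \<le> w \<bullet> (N *v w)" using PN unfolding psd_def w_def by (simp add: qf_quad)
      hence "0 \<le> \<alpha> * (w \<bullet> (N *v w))" using a0 by simp
      moreover have "0 < \<beta> * (u \<bullet> u)" using bp u by simp
      ultimately have "0 < w \<bullet> (M *v w)" using i1 by linarith
      thus "0 < u \<bullet> (qf M Z *v u)" by (simp add: qf_quad w_def)
    qed
  qed
qed

end

theorem theorem6:
  fixes M N :: "real^('k::finite + 'n::finite)^('k + 'n)"
  assumes "transpose M = M" and "transpose N = N"
    and "psd (- blk22 M)" and "psd (- blk22 N)"
    and "\<forall>v. blk22 N *v v = 0 \<longrightarrow> blk12 N *v v = 0"
    and "\<exists>Zb :: real^'k^'n. pd (qf N Zb)"
  shows "(\<forall>Z \<in> {Z :: real^'k^'n. psd (qf N Z)}. pd (qf M Z)) \<longleftrightarrow>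
         (\<exists>\<alpha> \<beta>. \<alpha> \<ge> 0 \<and> \<beta> > 0 \<and> psd (M - \<alpha> *\<^sub>R N - diagBeta \<beta>))"
proof -
  obtain Zb :: "real^'k^'n" where zb: "pd (qf N Zb)" using assms(6) by blast
  interpret S6 M N Zb using assms(1-5) zb by unfold_locales
  show ?thesis by (rule main_iff)
qed


end
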